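(* Let $W_1,\dots,W_m\in\mathbb{R}^{n\times n}$ be eventually doubly stochastic signed adjacency matrices, and let $Q\in\mathbb{R}^{(n-1)\times n}$ satisfy $QQ^\top=I_{n-1}$, $Q\mathbf{1}=0$. If there exists a symmetric positive definite $P\in\mathbb{R}^{n\times n}$ such that \[ QW_k^\top PW_kQ^\top-QPQ^\top\prec0\quad\text{for all }k=1,\dots,m, \] then $\{W_1,\dots,W_m\}$ is a consensus set for the switched system $\mathbf{x}(t+1)=W_{\sigma(t)}\mathbf{x}(t)$.
   Context: $W_k$ are real matrices (entries of any sign). $W$ is eventually positive if there is $t_0\in\mathbb{Z}_{\ge0}$ with $W^t$ entrywise positive for all integers $t\ge t_0$; eventually doubly stochastic means eventually positive with $W\mathbf{1}=W^\top\mathbf{1}=\mathbf{1}$. $X\prec0$ means symmetric negative definite. A switching signal is any map $\sigma:\mathbb{Z}_{\ge0}\to\{1,\dots,m\}$; a consensus set is one for which, for every switching signal and every $\mathbf{x}(0)$, $\mathbf{x}(t)\to\alpha\mathbf{1}$ for some $\alpha\in\mathbb{R}$. *)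

theory Defs
  imports "HOL-Analysis.Analysis"
begin

primrec matpow :: "real^'n^'n \<Rightarrow> nat \<Rightarrow> real^'n^'n" where
  "matpow A 0 = mat 1"
| "matpow A (Suc k) = A ** matpow A k"

definition ones :: "real^'n" where "ones = (\<chi> i. 1)"

definition eventually_positive :: "real^'n^'n \<Rightarrow> bool" where
  "eventually_positive W \<longleftrightarrow>
     (\<exists>t0::nat. \<forall>t\<ge>t0. \<forall>i j. (matpow W t) $ i $ j > 0)"

definition eventually_doubly_stochastic :: "real^'n^'n \<Rightarrow> bool" where
  "eventually_doubly_stochastic W \<longleftrightarrow>
     eventually_positive W \<and> W *v ones = ones \<and> transpose W *v ones = ones"

definition pos_def :: "real^'n^'n \<Rightarrow> bool" where
  "pos_def A \<longleftrightarrow> transpose A = A \<and> (\<forall>x. x \<noteq> 0 \<longrightarrow> x \<bullet> (A *v x) > 0)"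

definition neg_def :: "real^'n^'n \<Rightarrow> bool" where
  "neg_def A \<longleftrightarrow> transpose A = A \<and> (\<forall>x. x \<noteq> 0 \<longrightarrow> x \<bullet> (A *v x) < 0)"

primrec traj :: "(nat \<Rightarrow> real^'n^'n) \<Rightarrow> (nat \<Rightarrow> nat) \<Rightarrow> real^'n \<Rightarrow> nat \<Rightarrow> real^'n" where
  "traj W \<sigma> x0 0 = x0"
| "traj W \<sigma> x0 (Suc t) = W (\<sigma> t) *v traj W \<sigma> x0 t"

definition consensus_set :: "(nat \<Rightarrow> real^'n^'n) \<Rightarrow> nat \<Rightarrow> bool" where
  "consensus_set W m \<longleftrightarrow>
     (\<forall>\<sigma>::nat \<Rightarrow> nat. (\<forall>t. \<sigma> t \<in> {1..m}) \<longrightarrow>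
        (\<forall>x0. \<exists>\<alpha>::real. traj W \<sigma> x0 \<longlonglongrightarrow> \<alpha> *\<^sub>R ones))"

end

theory Submission imports Defs begin

lemma dot_tr: "(x::real^'m) \<bullet> ((A::real^'n^'m) *v y) = (transpose A *v x) \<bullet> y"
  by (simp add: dot_lmul_matrix)

lemma inner_ones_ones: "ones \<bullet> (ones::real^'n) = real CARD('n)"
  by (simp add: ones_def inner_vec_def)

lemma rows_orth:
  fixes Q :: "real^'n^'r"
  assumes "Q ** transpose Q = mat 1"
  shows "Q$r \<bullet> Q$s = (if r = s then 1 else 0)"
proof -
  have "(Q ** transpose Q) $ r $ s = row r Q \<bullet> row s Q"
    by (simp add: matrix_mult_transpose_dot_row)
  moreover have "\<And>i. row i Q = Q $ i" by (simp add: row_def vec_eq_iff)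
  ultimately show ?thesis using assms by (simp add: mat_def)
qed

lemma row_ones:
  fixes Q :: "real^'n^'r"
  assumes "Q *v ones = 0"
  shows "Q$r \<bullet> ones = 0"
  using assms by (metis matrix_vector_mul_component zero_index)

lemma span_full:
  fixes Q :: "real^'n^'r"
  assumes dim: "CARD('r) + 1 = CARD('n)" and QQt: "Q ** transpose Q = mat 1" and Q1: "Q *v ones = 0"
  shows "span (insert ones (range (\<lambda>r. Q$r))) = UNIV"
proof -
  let ?S = "insert ones (range (\<lambda>r. Q$r))"
  have inj: "inj (\<lambda>r. Q$r)"
    by (rule injI) (metis rows_orth[OF QQt] zero_neq_one)
  have nin: "ones \<notin> range (\<lambda>r. Q$r)"
  proof
    assume "ones \<in> range (\<lambda>r. Q$r)"
    then obtain r where "ones = Q$r" by auto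
    then show False using rows_orth[OF QQt, of r r] row_ones[OF Q1, of r] by simp
  qed
  have card: "card ?S = CARD('n)"
    using nin inj dim by (simp add: card_image)
  have po: "pairwise orthogonal ?S"
    unfolding pairwise_def orthogonal_def
    using rows_orth[OF QQt] row_ones[OF Q1] by (auto simp: inner_commute)
  have n0: "0 \<notin> ?S"
  proof
    assume "0 \<in> ?S"
    moreover have "ones \<noteq> (0::real^'n)" by (simp add: ones_def vec_eq_iff)
    ultimately obtain r where "0 = Q$r" by auto
    then show False using rows_orth[OF QQt, of r r] by simp
  qed
  have ind: "independent ?S" by (rule pairwise_orthogonal_independent[OF po n0])
  have "UNIV \<subseteq> span ?S"
    by (rule card_ge_dim_independent) (use ind card in auto)
  then show ?thesis by auto
qed

lemma decomp:
  fixes Q :: "real^'n^'r"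
  assumes dim: "CARD('r) + 1 = CARD('n)" and QQt: "Q ** transpose Q = mat 1" and Q1: "Q *v ones = 0"
  shows "x = transpose Q *v (Q *v x) + ((ones \<bullet> x) / real CARD('n)) *\<^sub>R ones"
proof -
  define z where "z = x - (transpose Q *v (Q *v x) + ((ones \<bullet> x) / real CARD('n)) *\<^sub>R ones)"
  have QQ: "\<And>y. Q *v (transpose Q *v y) = y"
    by (simp only: matrix_vector_mul_assoc QQt matrix_vector_mul_lid)
  have Qz: "Q *v z = 0"
    by (simp add: z_def matrix_vector_mult_diff_distrib matrix_vector_right_distrib
        matrix_vector_mult_scaleR QQ Q1 del: transpose_matrix_vector)
  have "ones \<bullet> (transpose Q *v (Q *v x)) = 0"
    by (metis dot_tr inner_commute Q1 inner_zero_right)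
  then have oz: "ones \<bullet> z = 0"
    by (simp add: z_def inner_diff_right inner_add_right inner_ones_ones)
  have "\<And>y. y \<in> insert ones (range (\<lambda>r. Q$r)) \<Longrightarrow> orthogonal z y"
    using oz Qz unfolding orthogonal_def
    by (auto simp: inner_commute) (metis inner_commute matrix_vector_mul_component zero_index)
  then have "orthogonal z z"
    using orthogonal_to_span span_full[OF dim QQt Q1] by blast
  then have "z = 0" by (simp add: orthogonal_self)
  then show ?thesis by (simp add: z_def del: transpose_matrix_vector)
qed


lemma quad_scale: "(c *\<^sub>R v) \<bullet> ((P::real^'n^'n) *v (c *\<^sub>R v)) = c^2 * (v \<bullet> (P *v v))"
  by (simp add: matrix_vector_mult_scaleR power2_eq_square)

lemma cont_quad: "continuous_on S (\<lambda>u::real^'n. (A *v u) \<bullet> ((P::real^'n^'n) *v (A *v u)))"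
proof -
  have l: "\<And>B::real^'n^'n. \<And>T. continuous_on T (\<lambda>u. B *v u)"
    by (intro linear_continuous_on matrix_vector_mul_bounded_linear)
  have "continuous_on UNIV (\<lambda>u::real^'n. (A *v u) \<bullet> (P *v (A *v u)))"
    by (intro continuous_on_inner l) (rule continuous_on_compose2[OF l l], auto)
  then show ?thesis using continuous_on_subset by blast
qed

lemma key_strict:
  fixes Q :: "real^'n^'r" and P Wk :: "real^'n^'n"
  assumes dim: "CARD('r) + 1 = CARD('n)" and QQt: "Q ** transpose Q = mat 1" and Q1: "Q *v ones = 0"
    and lmi: "neg_def (Q ** transpose Wk ** P ** Wk ** transpose Q - Q ** P ** transpose Q)"
    and u1: "ones \<bullet> u = 0" and u0: "u \<noteq> 0"
  shows "(Wk *v u) \<bullet> (P *v (Wk *v u)) < u \<bullet> (P *v u)"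
proof -
  define y where "y = Q *v u"
  have uy: "u = transpose Q *v y"
    using decomp[OF dim QQt Q1, of u] u1 by (simp add: y_def del: transpose_matrix_vector)
  have y0: "y \<noteq> 0" using uy u0 by auto
  have neg: "y \<bullet> ((Q ** transpose Wk ** P ** Wk ** transpose Q - Q ** P ** transpose Q) *v y) < 0"
    using lmi y0 unfolding neg_def_def by blast
  have e1: "y \<bullet> ((Q ** transpose Wk ** P ** Wk ** transpose Q) *v y) = (Wk *v u) \<bullet> (P *v (Wk *v u))"
    by (simp only: matrix_vector_mul_assoc[symmetric] dot_tr transpose_transpose uy[symmetric])
  have e2: "y \<bullet> ((Q ** P ** transpose Q) *v y) = u \<bullet> (P *v u)"
    by (simp only: matrix_vector_mul_assoc[symmetric] dot_tr transpose_transpose uy[symmetric])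
  show ?thesis using neg e1 e2 by (simp add: matrix_vector_mult_diff_rdistrib inner_diff_right)
qed


theorem theorem10:
  fixes W :: "nat \<Rightarrow> real^'n^'n" and m :: nat
    and Q :: "real^'n^'r" and P :: "real^'n^'n"
  assumes dim: "CARD('r) + 1 = CARD('n)"
    and eds: "\<forall>k\<in>{1..m}. eventually_doubly_stochastic (W k)"
    and QQt: "Q ** transpose Q = mat 1"
    and Q1: "Q *v ones = 0"
    and P: "pos_def P"
    and lmi: "\<forall>k\<in>{1..m}.
       neg_def (Q ** transpose (W k) ** P ** W k ** transpose Q - Q ** P ** transpose Q)"
  shows "consensus_set W m"
  unfolding consensus_set_def
proof (intro allI impI)
  fix \<sigma> :: "nat \<Rightarrow> nat" and x0 :: "real^'n"
  assume \<sigma>: "\<forall>t. \<sigma> t \<in> {1..m}"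
  define V where "V u = u \<bullet> (P *v u)" for u :: "real^'n"
  define S0 where "S0 = sphere (0::real^'n) 1 \<inter> {u. ones \<bullet> u = 0}"
  obtain r0 :: 'r where True by auto
  have r0S: "Q$r0 \<in> S0"
    using rows_orth[OF QQt, of r0 r0] row_ones[OF Q1, of r0]
    by (simp add: S0_def norm_eq_sqrt_inner inner_commute)
  have cS0: "compact S0" unfolding S0_def
    by (intro compact_Int_closed compact_sphere closed_hyperplane)
  have Vpos: "\<And>u. u \<noteq> 0 \<Longrightarrow> V u > 0" using P unfolding pos_def_def V_def by blast
  have Vnn: "\<And>u. V u \<ge> 0" using Vpos by (metis V_def inner_zero_left order.strict_implies_order order_refl)
  have V0: "V 0 = 0" by (simp add: V_def)
  have Vsc: "\<And>c v. V (c *\<^sub>R v) = c^2 * V v" by (simp only: V_def quad_scale)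
  have S0n0: "\<And>v. v \<in> S0 \<Longrightarrow> v \<noteq> 0" by (auto simp: S0_def)
  have cV: "continuous_on S0 V" using cont_quad[of S0 "mat 1" P] by (simp add: V_def)
  obtain B where B: "\<forall>v\<in>S0. V v \<le> B"
    using continuous_attains_sup[OF cS0 _ cV] r0S by blast
  have Bpos: "B > 0" using B r0S Vpos[OF S0n0[OF r0S]] by force
  have "\<forall>k\<in>{1..m}. \<exists>dk>0. \<forall>v\<in>S0. V v - V (W k *v v) \<ge> dk"
  proof
    fix k assume k: "k \<in> {1..m}"
    have cf: "continuous_on S0 (\<lambda>v. V v - V (W k *v v))"
      using cV cont_quad[of S0 "W k" P] unfolding V_def by (intro continuous_on_diff) auto
    obtain v0 where v0: "v0 \<in> S0" "\<forall>v\<in>S0. V v0 - V (W k *v v0) \<le> V v - V (W k *v v)"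
      using continuous_attains_inf[OF cS0 _ cf] r0S by blast
    have "V (W k *v v0) < V v0"
      unfolding V_def
      by (rule key_strict[OF dim QQt Q1]) (use lmi k v0 S0n0 in \<open>auto simp: S0_def\<close>)
    then show "\<exists>dk>0. \<forall>v\<in>S0. V v - V (W k *v v) \<ge> dk"
      using v0 by (intro exI[of _ "V v0 - V (W k *v v0)"]) auto
  qed
  then obtain d where d: "\<forall>k\<in>{1..m}. d k > 0 \<and> (\<forall>v\<in>S0. V v - V (W k *v v) \<ge> d k)"
    by metis
  define \<delta> where "\<delta> = Min (insert 1 (d ` {1..m}))"
  have \<delta>pos: "\<delta> > 0" unfolding \<delta>_def using d by (subst Min_gr_iff) auto
  have \<delta>le: "\<And>k. k \<in> {1..m} \<Longrightarrow> \<delta> \<le> d k" unfolding \<delta>_def by (intro Min_le) auto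
  have dec: "V (W k *v u) \<le> V u - \<delta> * (norm u)^2" if k: "k \<in> {1..m}" and u: "ones \<bullet> u = 0" for k u
  proof (cases "u = 0")
    case True then show ?thesis by (simp add: V0)
  next
    case False
    define v where "v = (1 / norm u) *\<^sub>R u"
    have vS: "v \<in> S0" using False u by (simp add: S0_def v_def)
    have uv: "u = norm u *\<^sub>R v" using False by (simp add: v_def)
    have "V (W k *v u) = (norm u)^2 * V (W k *v v)"
      by (subst uv) (simp add: matrix_vector_mult_scaleR Vsc)
    moreover have "V u = (norm u)^2 * V v" by (subst uv) (simp add: Vsc)
    moreover have "V v - V (W k *v v) \<ge> \<delta>" using d k vS \<delta>le[OF k] by force
    ultimately have "V u - V (W k *v u) \<ge> (norm u)^2 * \<delta>"
      by (metis mult_left_mono right_diff_distrib zero_le_power2)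
    then show ?thesis by (simp add: algebra_simps)
  qed
  have upp: "V u \<le> B * (norm u)^2" if u: "ones \<bullet> u = 0" for u
  proof (cases "u = 0")
    case True then show ?thesis by (simp add: V0)
  next
    case False
    define v where "v = (1 / norm u) *\<^sub>R u"
    have vS: "v \<in> S0" using False u by (simp add: S0_def v_def)
    have uv: "u = norm u *\<^sub>R v" using False by (simp add: v_def)
    have "V u = (norm u)^2 * V v" by (subst uv) (simp add: Vsc)
    then show ?thesis using B vS by (metis mult.commute mult_left_mono zero_le_power2)
  qed
  define \<rho> where "\<rho> = max 0 (1 - \<delta> / B)"
  have \<rho>0: "\<rho> \<ge> 0" and \<rho>1: "\<rho> < 1" using \<delta>pos Bpos by (auto simp: \<rho>_def)
  have contr: "V (W k *v u) \<le> \<rho> * V u" if k: "k \<in> {1..m}" and u: "ones \<bullet> u = 0" for k u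
  proof -
    have "\<delta> / B * V u \<le> \<delta> / B * (B * (norm u)^2)"
      using upp[OF u] \<delta>pos Bpos by (intro mult_left_mono) auto
    also have "\<dots> = \<delta> * (norm u)^2" using Bpos by simp
    finally have "V (W k *v u) \<le> (1 - \<delta> / B) * V u" using dec[OF k u] by (simp add: algebra_simps)
    also have "\<dots> \<le> \<rho> * V u" unfolding \<rho>_def using Vnn[of u] by (intro mult_right_mono) auto
    finally show ?thesis .
  qed
  define c where "c = (ones \<bullet> x0) / real CARD('n)"
  define u where "u t = traj W \<sigma> x0 t - c *\<^sub>R ones" for t
  have avg: "ones \<bullet> traj W \<sigma> x0 t = ones \<bullet> x0" for t
  proof (induction t)
    case (Suc t)
    have "transpose (W (\<sigma> t)) *v ones = ones"
      using eds \<sigma> unfolding eventually_doubly_stochastic_def by blast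
    then show ?case using Suc by (simp add: dot_tr del: transpose_matrix_vector)
  qed simp
  have u1: "ones \<bullet> u t = 0" for t
    by (simp add: u_def inner_diff_right avg inner_ones_ones c_def)
  have ustep: "u (Suc t) = W (\<sigma> t) *v u t" for t
  proof -
    have "W (\<sigma> t) *v ones = ones"
      using eds \<sigma> unfolding eventually_doubly_stochastic_def by blast
    then show ?thesis
      by (simp add: u_def matrix_vector_mult_diff_distrib matrix_vector_mult_scaleR)
  qed
  have Vu: "V (u t) \<le> \<rho>^t * V (u 0)" for t
  proof (induction t)
    case (Suc t)
    have "V (u (Suc t)) \<le> \<rho> * V (u t)" using contr[OF _ u1] \<sigma> ustep by simp
    also have "\<dots> \<le> \<rho> * (\<rho>^t * V (u 0))" using Suc \<rho>0 by (intro mult_left_mono)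
    finally show ?case by simp
  qed simp
  have nb: "(norm (u t))^2 \<le> \<rho>^t * V (u 0) / \<delta>" for t
  proof -
    have "0 \<le> V (u t) - \<delta> * (norm (u t))^2"
      using dec[OF _ u1, of "\<sigma> t" t] \<sigma> Vnn[of "W (\<sigma> t) *v u t"] by force
    then have "\<delta> * (norm (u t))^2 \<le> \<rho>^t * V (u 0)" using Vu[of t] by simp
    then show ?thesis using \<delta>pos by (simp add: field_simps)
  qed
  have "(\<lambda>t. sqrt (\<rho>^t * V (u 0) / \<delta>)) \<longlonglongrightarrow> sqrt (0 * V (u 0) / \<delta>)"
    using \<rho>0 \<rho>1 \<delta>pos by (intro tendsto_real_sqrt tendsto_divide
        LIMSEQ_power_zero tendsto_mult) auto
  then have lim0: "(\<lambda>t. sqrt (\<rho>^t * V (u 0) / \<delta>)) \<longlonglongrightarrow> 0" by simp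
  have "u \<longlonglongrightarrow> 0"
    by (rule Lim_null_comparison[OF _ lim0]) (use nb in \<open>auto intro!: always_eventually real_le_rsqrt\<close>)
  then have "(\<lambda>t. u t + c *\<^sub>R ones) \<longlonglongrightarrow> 0 + c *\<^sub>R ones"
    by (intro tendsto_add tendsto_const)
  then show "\<exists>\<alpha>. traj W \<sigma> x0 \<longlonglongrightarrow> \<alpha> *\<^sub>R ones"
    by (intro exI[of _ c]) (simp add: u_def)
qed

end
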